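(* Let $T$ be a finite rooted tree with root $v_0$ and leaves identified with classes $1,\dots,K$; identify each non-root node $v_j$ with the set of classes in its subtree, and let $a(y)$ be the set of non-root nodes on the path from leaf $y$ to the root (including the leaf). For a probability vector $f=(f_1,\dots,f_K)$ and label $y$, define the unweighted loss $$\mathcal L(f,y)=-\sum_{v_j\in a(y)}\log\Big(\sum_{k\in v_j} f_k\Big).$$ Then $\mathcal L$ is not, in general, a proper scoring rule: there exist trees $T$ and probability vectors $\pi$ such that $f=\pi$ does not minimize $\sum_{k=1}^K\pi_k\,\mathcal L(f,k)$ over the probability simplex.
   Context: Proper scoring rule: a loss $\mathcal L(f,y)$ on probability vectors over $K$ classes is proper if, for every distribution $\pi$ of the label, the expected loss $\sum_k \pi_k\mathcal L(f,k)$ is minimized over the simplex at $f=\pi$. *)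

theory Defs
  imports Complex_Main
begin

(* A finite rooted tree on nodes {0..<N}: node 0 is the root, p is the parent map
   with p j < j for every non-root node j (so every node reaches the root). *)
definition valid_tree :: "nat \<Rightarrow> (nat \<Rightarrow> nat) \<Rightarrow> bool" where
  "valid_tree N p \<longleftrightarrow> N \<ge> 1 \<and> p 0 = 0 \<and> (\<forall>j\<in>{1..<N}. p j < j)"

definition is_anc :: "(nat \<Rightarrow> nat) \<Rightarrow> nat \<Rightarrow> nat \<Rightarrow> bool" where
  "is_anc p v w \<longleftrightarrow> (\<exists>n. (p ^^ n) w = v)"

definition is_leaf :: "nat \<Rightarrow> (nat \<Rightarrow> nat) \<Rightarrow> nat \<Rightarrow> bool" where
  "is_leaf N p v \<longleftrightarrow> v < N \<and> \<not> (\<exists>j\<in>{1..<N}. p j = v)"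

(* classes (0..K-1) in the subtree of v, where lf k is the leaf of class k *)
definition node_classes :: "(nat \<Rightarrow> nat) \<Rightarrow> nat \<Rightarrow> (nat \<Rightarrow> nat) \<Rightarrow> nat \<Rightarrow> nat set" where
  "node_classes p K lf v = {k. k < K \<and> is_anc p v (lf k)}"

definition path_nodes :: "nat \<Rightarrow> (nat \<Rightarrow> nat) \<Rightarrow> (nat \<Rightarrow> nat) \<Rightarrow> nat \<Rightarrow> nat set" where
  "path_nodes N p lf y = {j. 1 \<le> j \<and> j < N \<and> is_anc p j (lf y)}"

definition tree_loss ::
  "nat \<Rightarrow> (nat \<Rightarrow> nat) \<Rightarrow> nat \<Rightarrow> (nat \<Rightarrow> nat) \<Rightarrow> (nat \<Rightarrow> real) \<Rightarrow> nat \<Rightarrow> real" where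
  "tree_loss N p K lf f y =
     - (\<Sum>j\<in>path_nodes N p lf y. ln (\<Sum>k\<in>node_classes p K lf j. f k))"

definition expected_loss ::
  "nat \<Rightarrow> (nat \<Rightarrow> nat) \<Rightarrow> nat \<Rightarrow> (nat \<Rightarrow> nat) \<Rightarrow> (nat \<Rightarrow> real) \<Rightarrow> (nat \<Rightarrow> real) \<Rightarrow> real" where
  "expected_loss N p K lf \<pi> f = (\<Sum>k<K. \<pi> k * tree_loss N p K lf f k)"

definition prob_simplex :: "nat \<Rightarrow> (nat \<Rightarrow> real) set" where
  "prob_simplex K = {f. (\<forall>k<K. 0 \<le> f k) \<and> (\<Sum>k<K. f k) = 1}"

end

theory Submission
  imports Defs
begin

definition pp :: "nat \<Rightarrow> nat" where "pp j = (if j = 2 \<or> j = 3 then 1 else 0)"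

definition lf2 :: "nat \<Rightarrow> nat" where "lf2 k = k + 2"

lemma pp_pow: "(pp ^^ n) w = (if n = 0 then w else if n = 1 then pp w else 0)"
proof (induction n)
  case 0 then show ?case by simp
next
  case (Suc n) then show ?case by (auto simp: pp_def)
qed

lemma anc_pp: "is_anc pp v w \<longleftrightarrow> v = w \<or> v = pp w \<or> v = 0"
proof
  assume "is_anc pp v w" then obtain n where "(pp ^^ n) w = v" unfolding is_anc_def by blast
  then show "v = w \<or> v = pp w \<or> v = 0" by (simp add: pp_pow split: if_splits)
next
  assume h: "v = w \<or> v = pp w \<or> v = 0"
  have "(pp ^^ 0) w = w" "(pp ^^ 1) w = pp w" "(pp ^^ 2) w = 0" by (simp_all add: pp_pow)
  then show "is_anc pp v w" using h unfolding is_anc_def by metis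
qed

lemma leaves: "{v. is_leaf 5 pp v} = {2,3,4}"
  unfolding is_leaf_def pp_def by (auto simp: eval_nat_numeral less_Suc_eq)

lemma pn0: "path_nodes 5 pp lf2 0 = {1,2}"
  unfolding path_nodes_def anc_pp pp_def lf2_def by auto
lemma pn1: "path_nodes 5 pp lf2 1 = {1,3}"
  unfolding path_nodes_def anc_pp pp_def lf2_def by auto
lemma pn2: "path_nodes 5 pp lf2 2 = {4}"
  unfolding path_nodes_def anc_pp pp_def lf2_def by auto
lemma nc1: "node_classes pp 3 lf2 1 = {0,1}"
  unfolding node_classes_def anc_pp pp_def lf2_def by auto
lemma nc2: "node_classes pp 3 lf2 2 = {0}"
  unfolding node_classes_def anc_pp pp_def lf2_def by auto
lemma nc3: "node_classes pp 3 lf2 3 = {1}"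
  unfolding node_classes_def anc_pp pp_def lf2_def by auto
lemma nc4: "node_classes pp 3 lf2 4 = {2}"
  unfolding node_classes_def anc_pp pp_def lf2_def by auto

lemma EL: "expected_loss 5 pp 3 lf2 q f =
   - q 0 * (ln (f 0 + f 1) + ln (f 0)) - q 1 * (ln (f 0 + f 1) + ln (f 1)) - q 2 * ln (f 2)"
proof -
  have u: "{..<3::nat} = {0,1,2}" by auto
  show ?thesis
    unfolding expected_loss_def tree_loss_def u
    by (simp add: pn0[simplified] pn1[simplified] pn2[simplified] nc1[simplified] nc1 nc2 nc3 nc4 algebra_simps)
qed

lemma key: "2 * ln 2 > (3/2) * ln (3::real) - (1/2) * ln 2"
proof -
  have "ln ((27::real)) < ln 32" by simp
  moreover have "ln (27::real) = 3 * ln 3" using ln_realpow[of 3 3] by simp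
  moreover have "ln (32::real) = 5 * ln 2" using ln_realpow[of 2 5] by simp
  ultimately show ?thesis by simp
qed

theorem proposition2:
  shows "\<exists>N p K lf \<pi>. valid_tree N p \<and> bij_betw lf {..<K} {v. is_leaf N p v}
     \<and> \<pi> \<in> prob_simplex K \<and> (\<forall>k<K. 0 < \<pi> k)
     \<and> (\<exists>f. f \<in> prob_simplex K \<and> (\<forall>k<K. 0 < f k)
            \<and> expected_loss N p K lf \<pi> f < expected_loss N p K lf \<pi> \<pi>)"
proof -
  define q :: "nat \<Rightarrow> real" where "q = (\<lambda>k. if k = 2 then 1/2 else 1/4)"
  define f :: "nat \<Rightarrow> real" where "f = (\<lambda>k. 1/3)"
  have vt: "valid_tree 5 pp" unfolding valid_tree_def pp_def by auto
  have bij: "bij_betw lf2 {..<3} {v. is_leaf 5 pp v}"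
    unfolding leaves bij_betw_def lf2_def by (auto simp: eval_nat_numeral lessThan_Suc)
  have qs: "q \<in> prob_simplex 3" "\<forall>k<3. 0 < q k"
    unfolding prob_simplex_def q_def by (auto simp: eval_nat_numeral lessThan_Suc)
  have fs: "f \<in> prob_simplex 3" "\<forall>k<3. 0 < f k"
    unfolding prob_simplex_def f_def by (auto simp: eval_nat_numeral lessThan_Suc)
  have ef: "expected_loss 5 pp 3 lf2 q f = (3/2) * ln 3 - (1/2) * ln 2"
    unfolding EL q_def f_def by (simp add: ln_div algebra_simps)
  have eq: "expected_loss 5 pp 3 lf2 q q = 2 * ln 2"
  proof -
    have "ln (1/4::real) = - 2 * ln 2" using ln_realpow[of 2 2] by (simp add: ln_div)
    then show ?thesis unfolding EL q_def by (simp add: ln_div algebra_simps)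
  qed
  have "expected_loss 5 pp 3 lf2 q f < expected_loss 5 pp 3 lf2 q q"
    using ef eq key by simp
  then show ?thesis using vt bij qs fs by blast
qed

end
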